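(* Let $\tilde{\mathcal E}\ge0$ be a hermitian operator on $\mathbb C^\Lambda$ whose off-diagonal matrix elements are negative. For $h$ real, let $\mathcal Q_4(h)$ be the block matrix indexed by $j,j'\in\{0,\dots,n_\tau\}$ with $$\mathcal Q_4(h)_{j,j'}=\delta_{j,j'}\big(\mathbf 1+\epsilon\tilde{\mathcal E}-i\sqrt\epsilon\,h_j\big)-\delta_{j+1,j'}\mathbf 1 .$$ Then $\mathcal C_4(h)=\mathcal Q_4(h)^{-1}$ satisfies, for all real $h$ and all $j,j',x,x'$, $$\big|\mathcal C_4(h)_{(j,x),(j',x')}\big|\le\mathcal C_4(0)_{(j,x),(j',x')},$$ and the right hand side is bounded uniformly in $n_\tau$ (and in $j,j',x,x'$).
   Context: $\Lambda$ is a finite discrete torus $\mathbb Z^d/L\mathbb Z^d$ (spacing $1$); operators on $\mathbb C^\Lambda$ are identified with their matrices and functions on $\Lambda$ (in particular $h_j\in\mathbb R^\Lambda$) act as multiplication operators. $\beta>0$ is fixed, $n_\tau\in\mathbb N$, $\epsilon=\beta/n_\tau$, $h=(h_j)_{j=1}^{n_\tau}$ with $h_j\in\mathbb R^\Lambda$ and the convention $h_0=0$. Matrix elements $\mathcal C_4(h)_{(j,x),(j',x')}$ refer to the standard basis of $(\mathbb C^\Lambda)^{n_\tau+1}$. *)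

theory Defs
  imports "HOL-Analysis.Analysis"
begin

text \<open>The discrete torus \<open>\<Lambda> = \<int>^d / L\<int>^d\<close>, represented by the canonical
  representatives \<open>x = (x_0,\<dots>,x_{d-1})\<close> with \<open>0 \<le> x_i < L\<close>
  (coordinates \<open>i \<ge> d\<close> are fixed to 0).\<close>
definition torus :: "nat \<Rightarrow> int \<Rightarrow> (nat \<Rightarrow> int) set" where
  "torus d L = {x. (\<forall>i<d. 0 \<le> x i \<and> x i < L) \<and> (\<forall>i\<ge>d. x i = 0)}"

type_synonym site = "nat \<Rightarrow> int"

definition hermitian_on :: "site set \<Rightarrow> (site \<Rightarrow> site \<Rightarrow> complex) \<Rightarrow> bool" where
  "hermitian_on \<Lambda> E \<longleftrightarrow> (\<forall>x\<in>\<Lambda>. \<forall>y\<in>\<Lambda>. E x y = cnj (E y x))"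

definition pos_semidef_on :: "site set \<Rightarrow> (site \<Rightarrow> site \<Rightarrow> complex) \<Rightarrow> bool" where
  "pos_semidef_on \<Lambda> E \<longleftrightarrow>
     (\<forall>v :: site \<Rightarrow> complex. 0 \<le> Re (\<Sum>x\<in>\<Lambda>. \<Sum>y\<in>\<Lambda>. cnj (v x) * E x y * v y))"

definition idx :: "nat \<Rightarrow> site set \<Rightarrow> (nat \<times> site) set" where
  "idx n \<Lambda> = {0..n} \<times> \<Lambda>"

definition is_inverse_on :: "'i set \<Rightarrow> ('i \<Rightarrow> 'i \<Rightarrow> complex) \<Rightarrow> ('i \<Rightarrow> 'i \<Rightarrow> complex) \<Rightarrow> bool" where
  "is_inverse_on I A B \<longleftrightarrow>
     (\<forall>a\<in>I. \<forall>c\<in>I. (\<Sum>b\<in>I. A a b * B b c) = (if a = c then 1 else 0)) \<and>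
     (\<forall>a\<in>I. \<forall>c\<in>I. (\<Sum>b\<in>I. B a b * A b c) = (if a = c then 1 else 0))"

definition inverse_on :: "'i set \<Rightarrow> ('i \<Rightarrow> 'i \<Rightarrow> complex) \<Rightarrow> ('i \<Rightarrow> 'i \<Rightarrow> complex)" where
  "inverse_on I A = (SOME B. is_inverse_on I A B)"

text \<open>\<open>\<Q>\<^sub>4(h)\<close> with \<open>\<epsilon> = \<beta>/n\<^sub>\<tau>\<close>, block indices \<open>j,j' \<in> {0..n\<^sub>\<tau>}\<close>,
  and the convention \<open>h\<^sub>0 = 0\<close> (the value \<open>h 0\<close> is ignored).\<close>
definition Q4 :: "real \<Rightarrow> nat \<Rightarrow> (site \<Rightarrow> site \<Rightarrow> complex) \<Rightarrow> (nat \<Rightarrow> site \<Rightarrow> real)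
                    \<Rightarrow> nat \<times> site \<Rightarrow> nat \<times> site \<Rightarrow> complex" where
  "Q4 \<beta> n E h = (\<lambda>(j, x) (j', x').
     let \<epsilon> = \<beta> / real n;
         hj = (if j = 0 then 0 else h j x)
     in (if j = j' then (if x = x' then 1 else 0) + complex_of_real \<epsilon> * E x x'
                         - \<i> * complex_of_real (sqrt \<epsilon> * hj) * (if x = x' then 1 else 0)
         else 0)
        - (if j + 1 = j' \<and> x = x' then 1 else 0))"

definition C4 :: "real \<Rightarrow> nat \<Rightarrow> site set \<Rightarrow> (site \<Rightarrow> site \<Rightarrow> complex) \<Rightarrow> (nat \<Rightarrow> site \<Rightarrow> real)
                    \<Rightarrow> nat \<times> site \<Rightarrow> nat \<times> site \<Rightarrow> complex" where
  "C4 \<beta> n \<Lambda> E h = inverse_on (idx n \<Lambda>) (Q4 \<beta> n E h)"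

end

theory Submission imports Defs "Jordan_Normal_Form.Determinant" begin

lemma inj_imp_inverse:
  fixes I :: "'i set" and A :: "'i \<Rightarrow> 'i \<Rightarrow> complex"
  assumes fin: "finite I"
  and inj: "\<And>v. \<forall>a\<in>I. (\<Sum>b\<in>I. A a b * v b) = 0 \<Longrightarrow> \<forall>a\<in>I. v a = 0"
  shows "\<exists>B. is_inverse_on I A B"
proof -
  define N where "N = card I"
  obtain f where f: "bij_betw f {0..<N} I" using ex_bij_betw_nat_finite[OF fin] N_def by blast
  define g where "g = inv_into {0..<N} f"
  have g: "bij_betw g I {0..<N}" using bij_betw_inv_into f g_def by blast
  have fg: "\<And>a. a\<in>I \<Longrightarrow> f (g a) = a" using f g_def by (meson bij_betw_inv_into_right)
  have gf: "\<And>i. i<N \<Longrightarrow> g (f i) = i" using f g_def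
    by (metis atLeastLessThan_iff bij_betw_inv_into_left zero_le)
  have gI: "\<And>a. a\<in>I \<Longrightarrow> g a < N" using g by (auto simp: bij_betw_def)
  have fI: "\<And>i. i<N \<Longrightarrow> f i \<in> I" using f by (auto simp: bij_betw_def)
  have reidx: "\<And>F. (\<Sum>b\<in>I. F b) = (\<Sum>k<N. F (f k))"
    using sum.reindex_bij_betw[OF f] by (metis atLeast0LessThan)
  define Am where "Am = mat N N (\<lambda>(i,k). A (f i) (f k))"
  have Ac: "Am \<in> carrier_mat N N" by (simp add: Am_def)
  have "det Am \<noteq> 0"
  proof
    assume "det Am = 0"
    then obtain v where v: "v \<in> carrier_vec N" "v \<noteq> 0\<^sub>v N" "Am *\<^sub>v v = 0\<^sub>v N"
      using det_0_iff_vec_prod_zero_field[OF Ac] by auto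
    define w where "w b = v $ g b" for b
    have "\<forall>a\<in>I. (\<Sum>b\<in>I. A a b * w b) = 0"
    proof
      fix a assume a: "a\<in>I"
      have "(\<Sum>b\<in>I. A a b * w b) = (\<Sum>k<N. A a (f k) * w (f k))" by (rule reidx)
      also have "\<dots> = (\<Sum>k<N. Am $$ (g a, k) * v $ k)"
        using gf fg a gI by (auto simp: Am_def w_def intro!: sum.cong)
      also have "\<dots> = (Am *\<^sub>v v) $ g a"
        using v(1) gI[OF a] Ac by (auto simp: mult_mat_vec_def scalar_prod_def atLeast0LessThan mult.commute intro!: sum.cong)
      also have "\<dots> = 0" using v(3) gI[OF a] by simp
      finally show "(\<Sum>b\<in>I. A a b * w b) = 0" .
    qed
    then have "\<forall>a\<in>I. w a = 0" by (rule inj)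
    then have "v = 0\<^sub>v N"
    proof (intro eq_vecI)
      fix i assume "i < dim_vec (0\<^sub>v N :: complex vec)"
      then have i: "i < N" by simp
      have "w (f i) = 0" using \<open>\<forall>a\<in>I. w a = 0\<close> fI[OF i] by blast
      then show "v $ i = 0\<^sub>v N $ i" using gf[OF i] i by (simp add: w_def)
    qed (use v(1) in simp)
    with v(2) show False by simp
  qed
  then have "Am \<in> Units (ring_mat TYPE(complex) N ())" by (rule det_non_zero_imp_unit[OF Ac])
  then obtain Bm where Bm: "Bm \<in> carrier_mat N N" "Bm * Am = 1\<^sub>m N" "Am * Bm = 1\<^sub>m N"
    by (auto simp: Units_def ring_mat_def)
  define B where "B a c = Bm $$ (g a, g c)" for a c
  have ginj: "\<And>a c. a\<in>I \<Longrightarrow> c\<in>I \<Longrightarrow> g a = g c \<longleftrightarrow> a = c" using fg by metis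
  show ?thesis
  proof (rule exI[of _ B], unfold is_inverse_on_def, intro conjI ballI)
    fix a c assume a: "a\<in>I" and c: "c\<in>I"
    have "(\<Sum>b\<in>I. A a b * B b c) = (\<Sum>k<N. Am $$ (g a, k) * Bm $$ (k, g c))"
      unfolding reidx using gf fg a gI by (auto simp: Am_def B_def intro!: sum.cong)
    also have "\<dots> = (Am * Bm) $$ (g a, g c)"
      using Bm(1) Ac gI a c by (auto simp: times_mat_def scalar_prod_def atLeast0LessThan intro!: sum.cong)
    also have "\<dots> = (if a = c then 1 else 0)" using Bm(3) gI a c ginj by simp
    finally show "(\<Sum>b\<in>I. A a b * B b c) = (if a = c then 1 else 0)" .
  next
    fix a c assume a: "a\<in>I" and c: "c\<in>I"
    have "(\<Sum>b\<in>I. B a b * A b c) = (\<Sum>k<N. Bm $$ (g a, k) * Am $$ (k, g c))"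
      unfolding reidx using gf fg c gI by (auto simp: Am_def B_def intro!: sum.cong)
    also have "\<dots> = (Bm * Am) $$ (g a, g c)"
      using Bm(1) Ac gI a c by (auto simp: times_mat_def scalar_prod_def atLeast0LessThan intro!: sum.cong)
    also have "\<dots> = (if a = c then 1 else 0)" using Bm(2) gI a c ginj by simp
    finally show "(\<Sum>b\<in>I. B a b * A b c) = (if a = c then 1 else 0)" .
  qed
qed

definition Mr :: "real \<Rightarrow> (site \<Rightarrow> site \<Rightarrow> complex) \<Rightarrow> site \<Rightarrow> site \<Rightarrow> real" where
  "Mr \<epsilon> E x y = (if x = y then 1 else 0) + \<epsilon> * Re (E x y)"

definition Rm :: "real \<Rightarrow> (site \<Rightarrow> site \<Rightarrow> complex) \<Rightarrow> nat \<times> site \<Rightarrow> nat \<times> site \<Rightarrow> real" where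
  "Rm \<epsilon> E = (\<lambda>(j,x) (j',x'). (if j = j' then Mr \<epsilon> E x x' else 0) - (if j+1 = j' \<and> x = x' then 1 else 0))"

lemma row_R:
  assumes "finite \<Lambda>" "x \<in> \<Lambda>" "j \<le> n"
  shows "(\<Sum>b\<in>idx n \<Lambda>. Rm \<epsilon> E (j,x) b * w b)
     = (\<Sum>z\<in>\<Lambda>. Mr \<epsilon> E x z * w (j,z)) - (if j < n then w (Suc j, x) else 0)"
proof -
  have "(\<Sum>b\<in>idx n \<Lambda>. Rm \<epsilon> E (j,x) b * w b)
      = (\<Sum>j'\<in>{0..n}. \<Sum>x'\<in>\<Lambda>. Rm \<epsilon> E (j,x) (j',x') * w (j',x'))"
    by (simp add: idx_def sum.cartesian_product)
  also have "\<dots> = (\<Sum>j'\<in>{0..n}. (if j = j' then (\<Sum>x'\<in>\<Lambda>. Mr \<epsilon> E x x' * w (j',x')) else 0)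
                       - (if j + 1 = j' then w (j',x) else 0))"
  proof (intro sum.cong refl)
    fix j' assume "j' \<in> {0..n}"
    show "(\<Sum>x'\<in>\<Lambda>. Rm \<epsilon> E (j,x) (j',x') * w (j',x')) = (if j = j' then (\<Sum>x'\<in>\<Lambda>. Mr \<epsilon> E x x' * w (j',x')) else 0)
                       - (if j + 1 = j' then w (j',x) else 0)"
    proof (cases "j = j'")
      case True then show ?thesis by (simp add: Rm_def)
    next
      case False
      have "\<And>x'. Rm \<epsilon> E (j,x) (j',x') * w (j',x') = (if x = x' then (if j+1 = j' then - w (j',x) else 0) else 0)"
        using False by (auto simp: Rm_def)
      then show ?thesis using False assms by (simp add: sum.delta)
    qed
  qed
  also have "\<dots> = (\<Sum>z\<in>\<Lambda>. Mr \<epsilon> E x z * w (j,z)) - (if j < n then w (Suc j, x) else 0)"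
    using assms by (simp add: sum_subtractf sum.delta sum.delta')
  finally show ?thesis .
qed

lemma modulus:
  fixes Q :: "'i \<Rightarrow> 'i \<Rightarrow> complex" and R :: "'i \<Rightarrow> 'i \<Rightarrow> real"
  assumes fin: "finite I"
    and off: "\<And>a b. a\<in>I \<Longrightarrow> b\<in>I \<Longrightarrow> a \<noteq> b \<Longrightarrow> cmod (Q a b) \<le> - R a b"
    and dg: "\<And>a. a\<in>I \<Longrightarrow> R a a \<le> cmod (Q a a)"
    and eq: "(\<Sum>b\<in>I. Q a b * v b) = y"
    and a: "a\<in>I"
  shows "(\<Sum>b\<in>I. R a b * cmod (v b)) \<le> cmod y"
proof -
  have s1: "(\<Sum>b\<in>I. R a b * cmod (v b)) = R a a * cmod (v a) + (\<Sum>b\<in>I-{a}. R a b * cmod (v b))"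
    using sum.remove[OF fin a] by simp
  have s2: "Q a a * v a = y - (\<Sum>b\<in>I-{a}. Q a b * v b)"
    using eq sum.remove[OF fin a, of "\<lambda>b. Q a b * v b"] by (simp add: algebra_simps)
  have t1: "R a a * cmod (v a) \<le> cmod (Q a a * v a)"
    using dg[OF a] by (simp add: norm_mult mult_right_mono)
  have t2: "cmod (Q a a * v a) \<le> cmod y + cmod (\<Sum>b\<in>I-{a}. Q a b * v b)"
    unfolding s2 by (rule norm_triangle_ineq4)
  have t3: "cmod (\<Sum>b\<in>I-{a}. Q a b * v b) \<le> (\<Sum>b\<in>I-{a}. cmod (Q a b) * cmod (v b))"
    by (rule order_trans[OF norm_sum]) (simp add: norm_mult)
  have t4: "(\<Sum>b\<in>I-{a}. cmod (Q a b) * cmod (v b)) \<le> (\<Sum>b\<in>I-{a}. - R a b * cmod (v b))"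
    by (intro sum_mono mult_right_mono) (auto intro: off a)
  have t5: "(\<Sum>b\<in>I-{a}. - R a b * cmod (v b)) = - (\<Sum>b\<in>I-{a}. R a b * cmod (v b))"
    by (simp add: sum_negf)
  show ?thesis using s1 t1 t2 t3 t4 t5 by linarith
qed

lemma psd_real:
  assumes "pos_semidef_on \<Lambda> E"
  shows "(\<Sum>x\<in>\<Lambda>. \<Sum>y\<in>\<Lambda>. p x * Re (E x y) * p y) \<ge> 0"
proof -
  have "0 \<le> Re (\<Sum>x\<in>\<Lambda>. \<Sum>y\<in>\<Lambda>. cnj (complex_of_real (p x)) * E x y * complex_of_real (p y))"
    using assms[unfolded pos_semidef_on_def, rule_format, of "\<lambda>x. complex_of_real (p x)"] by simp
  also have "\<dots> = (\<Sum>x\<in>\<Lambda>. \<Sum>y\<in>\<Lambda>. p x * Re (E x y) * p y)"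
    by (simp add: mult.commute)
  finally show ?thesis .
qed

lemma quad:
  assumes fin: "finite \<Lambda>" and eps: "\<epsilon> \<ge> 0" and psd: "pos_semidef_on \<Lambda> E"
  shows "(\<Sum>x\<in>\<Lambda>. f x * (\<Sum>z\<in>\<Lambda>. Mr \<epsilon> E x z * f z)) \<ge> (\<Sum>x\<in>\<Lambda>. (f x)^2)"
proof -
  have r: "(\<Sum>z\<in>\<Lambda>. Mr \<epsilon> E x z * f z) = f x + \<epsilon> * (\<Sum>z\<in>\<Lambda>. Re (E x z) * f z)" if x: "x\<in>\<Lambda>" for x
  proof -
    have "(\<Sum>z\<in>\<Lambda>. Mr \<epsilon> E x z * f z) = (\<Sum>z\<in>\<Lambda>. (if x = z then f z else 0) + \<epsilon> * (Re (E x z) * f z))"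
      by (intro sum.cong) (auto simp: Mr_def algebra_simps)
    then show ?thesis using x fin by (simp add: sum.distrib sum_distrib_left)
  qed
  have "(\<Sum>x\<in>\<Lambda>. f x * (\<Sum>z\<in>\<Lambda>. Mr \<epsilon> E x z * f z))
      = (\<Sum>x\<in>\<Lambda>. f x * (f x + \<epsilon> * (\<Sum>z\<in>\<Lambda>. Re (E x z) * f z)))" using r by simp
  also have "\<dots> = (\<Sum>x\<in>\<Lambda>. (f x)^2) + \<epsilon> * (\<Sum>x\<in>\<Lambda>. \<Sum>z\<in>\<Lambda>. f x * Re (E x z) * f z)"
    by (simp add: distrib_left sum.distrib sum_distrib_left power2_eq_square mult_ac)
  finally have
    "(\<Sum>x\<in>\<Lambda>. f x * (\<Sum>z\<in>\<Lambda>. Mr \<epsilon> E x z * f z))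
      = (\<Sum>x\<in>\<Lambda>. (f x)^2) + \<epsilon> * (\<Sum>x\<in>\<Lambda>. \<Sum>z\<in>\<Lambda>. f x * Re (E x z) * f z)" .
  moreover have "\<epsilon> * (\<Sum>x\<in>\<Lambda>. \<Sum>z\<in>\<Lambda>. f x * Re (E x z) * f z) \<ge> 0"
    using psd_real[OF psd] eps by simp
  ultimately show ?thesis by linarith
qed

lemma Mmono:
  assumes fin: "finite \<Lambda>" and eps: "\<epsilon> \<ge> 0" and psd: "pos_semidef_on \<Lambda> E"
    and off: "\<And>x y. x\<in>\<Lambda> \<Longrightarrow> y\<in>\<Lambda> \<Longrightarrow> x \<noteq> y \<Longrightarrow> Re (E x y) \<le> 0"
    and ge: "\<And>x. x\<in>\<Lambda> \<Longrightarrow> (\<Sum>z\<in>\<Lambda>. Mr \<epsilon> E x z * f z) \<ge> 0"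
  shows "\<forall>x\<in>\<Lambda>. f x \<ge> 0"
proof -
  define p where "p x = max 0 (- f x)" for x
  define q where "q x = max 0 (f x)" for x
  have fpq: "\<And>x. f x = q x - p x" by (simp add: p_def q_def)
  have p0: "\<And>x. p x \<ge> 0" and q0: "\<And>x. q x \<ge> 0" by (auto simp: p_def q_def)
  have pq: "\<And>x. p x * q x = 0" by (simp add: p_def q_def max_def)
  have A0: "0 \<le> (\<Sum>x\<in>\<Lambda>. p x * (\<Sum>z\<in>\<Lambda>. Mr \<epsilon> E x z * f z))"
    by (intro sum_nonneg mult_nonneg_nonneg p0 ge)
  have A1: "(\<Sum>x\<in>\<Lambda>. p x * (\<Sum>z\<in>\<Lambda>. Mr \<epsilon> E x z * f z))
     = (\<Sum>x\<in>\<Lambda>. \<Sum>z\<in>\<Lambda>. p x * Mr \<epsilon> E x z * q z) - (\<Sum>x\<in>\<Lambda>. p x * (\<Sum>z\<in>\<Lambda>. Mr \<epsilon> E x z * p z))"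
    unfolding fpq by (simp add: sum_distrib_left left_diff_distrib right_diff_distrib sum_subtractf mult_ac)
  have A2: "(\<Sum>x\<in>\<Lambda>. \<Sum>z\<in>\<Lambda>. p x * Mr \<epsilon> E x z * q z) \<le> 0"
  proof (intro sum_nonpos)
    fix x z assume x: "x\<in>\<Lambda>" and z: "z\<in>\<Lambda>"
    show "p x * Mr \<epsilon> E x z * q z \<le> 0"
    proof (cases "x = z")
      case True
      have "p x * Mr \<epsilon> E x z * q z = Mr \<epsilon> E x z * (p x * q x)" using True by (simp add: mult_ac)
      then show ?thesis using pq[of x] by (metis mult_zero_right order_refl)
    next
      case False
      then have "Mr \<epsilon> E x z \<le> 0" using off[OF x z] eps by (simp add: Mr_def mult_nonneg_nonpos)
      then have "p x * Mr \<epsilon> E x z \<le> 0" using p0 by (simp add: mult_nonneg_nonpos)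
      then show ?thesis using q0 by (simp add: mult_nonpos_nonneg)
    qed
  qed
  have A3: "(\<Sum>x\<in>\<Lambda>. p x * (\<Sum>z\<in>\<Lambda>. Mr \<epsilon> E x z * p z)) \<ge> (\<Sum>x\<in>\<Lambda>. (p x)^2)"
    by (rule quad[OF fin eps psd])
  have "(\<Sum>x\<in>\<Lambda>. (p x)^2) \<le> 0" using A0 A1 A2 A3 by linarith
  then have "\<forall>x\<in>\<Lambda>. (p x)^2 = 0"
    using sum_nonneg_eq_0_iff[OF fin, of "\<lambda>x. (p x)^2"]
    by (metis (no_types, lifting) order_antisym sum_nonneg zero_le_power2)
  then show ?thesis by (auto simp: p_def)
qed

lemma L2:
  assumes fin: "finite \<Lambda>" and eps: "\<epsilon> \<ge> 0" and psd: "pos_semidef_on \<Lambda> E"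
    and eq: "\<And>x. x\<in>\<Lambda> \<Longrightarrow> (\<Sum>z\<in>\<Lambda>. Mr \<epsilon> E x z * f z) = u x"
  shows "(\<Sum>x\<in>\<Lambda>. (f x)^2) \<le> (\<Sum>x\<in>\<Lambda>. (u x)^2)"
proof -
  have "(\<Sum>x\<in>\<Lambda>. (f x)^2) \<le> (\<Sum>x\<in>\<Lambda>. f x * (\<Sum>z\<in>\<Lambda>. Mr \<epsilon> E x z * f z))"
    by (rule quad[OF fin eps psd])
  also have "\<dots> = (\<Sum>x\<in>\<Lambda>. f x * u x)" using eq by simp
  also have "\<dots> \<le> (\<Sum>x\<in>\<Lambda>. ((f x)^2 + (u x)^2) / 2)"
  proof (intro sum_mono)
    fix x
    have "0 \<le> (f x - u x)^2" by simp
    then show "f x * u x \<le> ((f x)^2 + (u x)^2) / 2" by (simp add: power2_diff)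
  qed
  also have "\<dots> = ((\<Sum>x\<in>\<Lambda>. (f x)^2) + (\<Sum>x\<in>\<Lambda>. (u x)^2)) / 2"
    by (simp add: sum_divide_distrib[symmetric] sum.distrib add_divide_distrib)
  finally show ?thesis by (simp add: field_simps)
qed


lemma main:
  fixes \<Lambda> :: "site set" and E :: "site \<Rightarrow> site \<Rightarrow> complex"
  assumes fin: "finite \<Lambda>" and \<beta>: "\<beta> > 0" and n: "n \<ge> 1"
    and herm: "hermitian_on \<Lambda> E" and psd: "pos_semidef_on \<Lambda> E"
    and off: "\<forall>x\<in>\<Lambda>. \<forall>y\<in>\<Lambda>. x \<noteq> y \<longrightarrow> Im (E x y) = 0 \<and> Re (E x y) \<le> 0"
  shows "is_inverse_on (idx n \<Lambda>) (Q4 \<beta> n E h) (C4 \<beta> n \<Lambda> E h) \<and>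
    (\<forall>j\<in>{0..n}. \<forall>j'\<in>{0..n}. \<forall>x\<in>\<Lambda>. \<forall>x'\<in>\<Lambda>.
      Im (C4 \<beta> n \<Lambda> E (\<lambda>_ _. 0) (j, x) (j', x')) = 0 \<and>
      cmod (C4 \<beta> n \<Lambda> E h (j, x) (j', x')) \<le> Re (C4 \<beta> n \<Lambda> E (\<lambda>_ _. 0) (j, x) (j', x')) \<and>
      Re (C4 \<beta> n \<Lambda> E (\<lambda>_ _. 0) (j, x) (j', x')) \<le> 1)"
proof -
  define \<epsilon> where "\<epsilon> = \<beta> / real n"
  have \<epsilon>: "\<epsilon> > 0" using \<beta> n by (simp add: \<epsilon>_def)
  define I where "I = idx n \<Lambda>"
  have finI: "finite I" using fin by (simp add: I_def idx_def)
  have Iin: "\<And>j x. (j,x) \<in> I \<longleftrightarrow> j \<le> n \<and> x \<in> \<Lambda>" by (simp add: I_def idx_def)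
  define R where "R = Rm \<epsilon> E"
  have offR: "\<And>x y. x\<in>\<Lambda> \<Longrightarrow> y\<in>\<Lambda> \<Longrightarrow> x \<noteq> y \<Longrightarrow> Re (E x y) \<le> 0" using off by blast
  have Ereal: "\<And>x y. x\<in>\<Lambda> \<Longrightarrow> y\<in>\<Lambda> \<Longrightarrow> Im (E x y) = 0"
  proof -
    fix x y assume x: "x\<in>\<Lambda>" and y: "y\<in>\<Lambda>"
    show "Im (E x y) = 0"
    proof (cases "x = y")
      case True
      have "E x x = cnj (E x x)" using herm x unfolding hermitian_on_def by blast
      then have "Im (E x x) = Im (cnj (E x x))" by (rule arg_cong)
      then have "Im (E x x) = - Im (E x x)" by simp
      then show ?thesis using True by simp
    next
      case False then show ?thesis using off x y by blast
    qed
  qed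
  have row: "\<And>j x w. j \<le> n \<Longrightarrow> x\<in>\<Lambda> \<Longrightarrow> (\<Sum>b\<in>I. R (j,x) b * w b)
      = (\<Sum>z\<in>\<Lambda>. Mr \<epsilon> E x z * w (j,z)) - (if j < n then w (Suc j, x) else 0)"
    unfolding I_def R_def by (rule row_R[OF fin])
  have Rmono: "\<forall>a\<in>I. w a \<ge> 0" if H: "\<And>a. a\<in>I \<Longrightarrow> (\<Sum>b\<in>I. R a b * w b) \<ge> 0" for w
  proof -
    have "\<forall>x\<in>\<Lambda>. w (k,x) \<ge> 0" if "k \<le> n" for k
      using that
    proof (induction k rule: inc_induct)
      case base
      show ?case
      proof (rule Mmono[OF fin less_imp_le[OF \<epsilon>] psd offR])
        fix x assume x: "x\<in>\<Lambda>"
        show "(\<Sum>z\<in>\<Lambda>. Mr \<epsilon> E x z * w (n,z)) \<ge> 0"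
          using H[of "(n,x)"] row[of n x w] x Iin by simp
      qed
    next
      case (step k)
      show ?case
      proof (rule Mmono[OF fin less_imp_le[OF \<epsilon>] psd offR])
        fix x assume x: "x\<in>\<Lambda>"
        have "(\<Sum>z\<in>\<Lambda>. Mr \<epsilon> E x z * w (k,z)) - w (Suc k, x) \<ge> 0"
          using H[of "(k,x)"] row[of k x w] x Iin step by simp
        moreover have "w (Suc k, x) \<ge> 0" using step.IH x by blast
        ultimately show "(\<Sum>z\<in>\<Lambda>. Mr \<epsilon> E x z * w (k,z)) \<ge> 0" by linarith
      qed
    qed
    then show ?thesis using Iin by auto
  qed
  have offQ: "cmod (Q4 \<beta> n E h' a b) \<le> - R a b" if "a\<in>I" "b\<in>I" "a \<noteq> b" for h' a b
  proof -
    obtain j x j' x' where ab: "a = (j,x)" "b = (j',x')" by (cases a, cases b) auto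
    have x: "x\<in>\<Lambda>" and x': "x'\<in>\<Lambda>" using that ab Iin by auto
    show ?thesis
    proof (cases "j = j'")
      case True
      then have xx: "x \<noteq> x'" using that ab by auto
      have "Q4 \<beta> n E h' a b = complex_of_real \<epsilon> * E x x'"
        using True xx ab by (simp add: Q4_def \<epsilon>_def)
      then have "cmod (Q4 \<beta> n E h' a b) = \<epsilon> * \<bar>Re (E x x')\<bar>"
        using \<epsilon> Ereal[OF x x'] by (simp add: norm_mult cmod_eq_Re)
      also have "\<dots> = - R a b" using offR[OF x x' xx] True xx ab \<epsilon>
        by (simp add: R_def Rm_def Mr_def)
      finally show ?thesis by simp
    next
      case False
      then show ?thesis using ab by (simp add: Q4_def R_def Rm_def)
    qed
  qed
  have dgQ: "R a a \<le> cmod (Q4 \<beta> n E h' a a)" if "a\<in>I" for h' a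
  proof -
    obtain j x where ab: "a = (j,x)" by (cases a) auto
    have "R a a = Re (Q4 \<beta> n E h' a a)" using ab by (simp add: Q4_def R_def Rm_def Mr_def \<epsilon>_def Let_def)
    then show ?thesis using complex_Re_le_cmod by simp
  qed
  have inv_ex: "\<exists>B. is_inverse_on I (Q4 \<beta> n E h') B" for h'
  proof (rule inj_imp_inverse[OF finI])
    fix v assume H: "\<forall>a\<in>I. (\<Sum>b\<in>I. Q4 \<beta> n E h' a b * v b) = 0"
    have "\<forall>a\<in>I. - cmod (v a) \<ge> 0"
    proof (rule Rmono)
      fix a assume a: "a\<in>I"
      have "(\<Sum>b\<in>I. R a b * cmod (v b)) \<le> cmod 0"
        by (rule modulus[OF finI offQ dgQ _ a]) (use H a in auto)
      then show "(\<Sum>b\<in>I. R a b * - cmod (v b)) \<ge> 0" by (simp add: sum_negf)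
    qed
    then show "\<forall>a\<in>I. v a = 0" by auto
  qed
  have Cinv: "is_inverse_on I (Q4 \<beta> n E h') (C4 \<beta> n \<Lambda> E h')" for h'
    unfolding C4_def inverse_on_def I_def[symmetric] by (rule someI_ex[OF inv_ex])
  have Q0: "Q4 \<beta> n E (\<lambda>_ _. 0) a b = complex_of_real (R a b)" if "a\<in>I" "b\<in>I" for a b
  proof -
    obtain j x j' x' where ab: "a = (j,x)" "b = (j',x')" by (cases a, cases b) auto
    have x: "x\<in>\<Lambda>" and x': "x'\<in>\<Lambda>" using that ab Iin by auto
    have "E x x' = complex_of_real (Re (E x x'))" using Ereal[OF x x'] by (simp add: complex_eq_iff)
    then show ?thesis using ab by (simp add: Q4_def R_def Rm_def Mr_def \<epsilon>_def Let_def)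
  qed
  define C where "C = C4 \<beta> n \<Lambda> E h"
  define C0 where "C0 = C4 \<beta> n \<Lambda> E (\<lambda>_ _. 0)"
  have colC: "(\<Sum>b\<in>I. R a b * cmod (C b c)) \<le> (if a = c then 1 else 0)" if a: "a\<in>I" and c: "c\<in>I" for a c
  proof -
    have "(\<Sum>b\<in>I. Q4 \<beta> n E h a b * C b c) = (if a = c then 1 else 0)"
      using Cinv[of h] a c unfolding is_inverse_on_def C_def by blast
    then have "(\<Sum>b\<in>I. R a b * cmod (C b c)) \<le> cmod (if a = c then 1 else 0 :: complex)"
      by (intro modulus[OF finI offQ dgQ _ a])
    then show ?thesis by (simp split: if_splits)
  qed
  have col0: "(\<Sum>b\<in>I. R a b * Re (C0 b c)) = (if a = c then 1 else 0) \<and> (\<Sum>b\<in>I. R a b * Im (C0 b c)) = 0"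
    if a: "a\<in>I" and c: "c\<in>I" for a c
  proof -
    have "(\<Sum>b\<in>I. Q4 \<beta> n E (\<lambda>_ _. 0) a b * C0 b c) = (if a = c then 1 else 0)"
      using Cinv[of "\<lambda>_ _. 0"] a c unfolding is_inverse_on_def C0_def by blast
    moreover have "(\<Sum>b\<in>I. Q4 \<beta> n E (\<lambda>_ _. 0) a b * C0 b c) = (\<Sum>b\<in>I. complex_of_real (R a b) * C0 b c)"
      using Q0 a by (intro sum.cong) auto
    ultimately have eq: "(\<Sum>b\<in>I. complex_of_real (R a b) * C0 b c) = (if a = c then 1 else 0)" by simp
    from arg_cong[OF eq, of Re] arg_cong[OF eq, of Im] show ?thesis by (simp split: if_splits)
  qed
  have res: "Im (C0 a c) = 0 \<and> cmod (C a c) \<le> Re (C0 a c) \<and> Re (C0 a c) \<le> 1"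
    if a: "a\<in>I" and c: "c\<in>I" for a c
  proof -
    have Im1: "\<forall>a\<in>I. Im (C0 a c) \<ge> 0"
      by (rule Rmono) (use col0[OF _ c] in simp)
    have Im2: "\<forall>a\<in>I. - Im (C0 a c) \<ge> 0"
      by (rule Rmono) (use col0[OF _ c] in \<open>simp add: sum_negf\<close>)
    have bd: "\<forall>a\<in>I. Re (C0 a c) - cmod (C a c) \<ge> 0"
    proof (rule Rmono)
      fix a assume a: "a\<in>I"
      show "(\<Sum>b\<in>I. R a b * (Re (C0 b c) - cmod (C b c))) \<ge> 0"
        using col0[OF a c] colC[OF a c] by (simp add: right_diff_distrib sum_subtractf)
    qed
    obtain j' x' where c': "c = (j',x')" by (cases c) auto
    have j': "j' \<le> n" and x': "x'\<in>\<Lambda>" using c c' Iin by auto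
    define g where "g b = Re (C0 b c)" for b
    define S where "S k = (\<Sum>x\<in>\<Lambda>. (g (k,x))^2)" for k
    have S0: "S k \<ge> 0" for k unfolding S_def by (intro sum_nonneg) simp
    have stepP: "S k \<le> 1 \<and> (j' < k \<longrightarrow> S k = 0)"
      if k: "k \<le> n" and IH: "k < n \<Longrightarrow> S (Suc k) \<le> 1 \<and> (j' < Suc k \<longrightarrow> S (Suc k) = 0)" for k
    proof -
      define u where "u x = (if (k,x) = c then 1 else 0) + (if k < n then g (Suc k, x) else 0)" for x
      have equ: "(\<Sum>z\<in>\<Lambda>. Mr \<epsilon> E x z * g (k,z)) = u x" if x: "x\<in>\<Lambda>" for x
      proof -
        have "(k,x) \<in> I" using Iin k x by simp
        from col0[OF this c] row[OF k x, of g]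
        show ?thesis by (simp add: u_def g_def)
      qed
      have L: "S k \<le> (\<Sum>x\<in>\<Lambda>. (u x)^2)" unfolding S_def
        by (rule L2[OF fin less_imp_le[OF \<epsilon>] psd equ])
      have zero_next: "(if k < n then g (Suc k, x) else 0) = 0" if "j' \<le> k" "x\<in>\<Lambda>" for x
      proof (cases "k < n")
        case True
        then have "S (Suc k) = 0" using IH that by auto
        then have "(\<Sum>x\<in>\<Lambda>. (g (Suc k, x))^2) = 0" by (simp add: S_def)
        then have "\<forall>x\<in>\<Lambda>. (g (Suc k, x))^2 = 0"
          using sum_nonneg_eq_0_iff[OF fin, of "\<lambda>x. (g (Suc k, x))^2"] by simp
        then show ?thesis using True that by simp
      qed simp
      show ?thesis
      proof (cases "j' < k")
        case True
        then have "\<forall>x\<in>\<Lambda>. u x = 0" using zero_next c' by (auto simp: u_def)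
        then have "S k \<le> 0" using L by simp
        then show ?thesis using S0[of k] by simp
      next
        case False
        show ?thesis
        proof (cases "j' = k")
          case True
          then have "\<forall>x\<in>\<Lambda>. u x = (if x = x' then 1 else 0)" using zero_next c' by (auto simp: u_def)
          then have "(\<Sum>x\<in>\<Lambda>. (u x)^2) = (\<Sum>x\<in>\<Lambda>. (if x = x' then 1 else 0))"
            by (intro sum.cong) auto
          also have "\<dots> = 1" using x' fin by (simp add: sum.delta')
          finally show ?thesis using L True by simp
        next
          case False2: False
          then have kn: "k < n" using False j' by simp
          then have "\<forall>x\<in>\<Lambda>. u x = g (Suc k, x)" using False False2 c' by (auto simp: u_def)
          then have "(\<Sum>x\<in>\<Lambda>. (u x)^2) = S (Suc k)" unfolding S_def by (intro sum.cong) auto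
          then show ?thesis using L IH[OF kn] False by simp
        qed
      qed
    qed
    have key: "S k \<le> 1" if "k \<le> n" for k
    proof -
      have "S k \<le> 1 \<and> (j' < k \<longrightarrow> S k = 0)"
        using that
      proof (induction k rule: inc_induct)
        case base show ?case using stepP[of n] by simp
      next
        case (step k) show ?case using stepP[of k] step.IH step.hyps by simp
      qed
      then show ?thesis by simp
    qed
    obtain j x where a': "a = (j,x)" by (cases a) auto
    have j: "j \<le> n" and x: "x\<in>\<Lambda>" using a a' Iin by auto
    have "(g (j,x))^2 \<le> S j" unfolding S_def
      by (rule member_le_sum[OF x _ fin, of "\<lambda>x. (g (j,x))^2"]) simp
    then have "(g (j,x))^2 \<le> 1" using key[OF j] by simp
    then have "\<bar>g (j,x)\<bar> \<le> 1" using abs_square_le_1 by blast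
    then have "g (j,x) \<le> 1" by (simp add: abs_le_iff)
    then have r3: "Re (C0 a c) \<le> 1" using a' by (simp add: g_def)
    have r1: "Im (C0 a c) = 0" using Im1 Im2 a by force
    have r2: "cmod (C a c) \<le> Re (C0 a c)" using bd a by force
    show ?thesis using r1 r2 r3 by blast
  qed
  have "is_inverse_on (idx n \<Lambda>) (Q4 \<beta> n E h) (C4 \<beta> n \<Lambda> E h)" using Cinv[of h] by (simp add: I_def)
  moreover have "\<forall>j\<in>{0..n}. \<forall>j'\<in>{0..n}. \<forall>x\<in>\<Lambda>. \<forall>x'\<in>\<Lambda>.
      Im (C4 \<beta> n \<Lambda> E (\<lambda>_ _. 0) (j, x) (j', x')) = 0 \<and>
      cmod (C4 \<beta> n \<Lambda> E h (j, x) (j', x')) \<le> Re (C4 \<beta> n \<Lambda> E (\<lambda>_ _. 0) (j, x) (j', x')) \<and>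
      Re (C4 \<beta> n \<Lambda> E (\<lambda>_ _. 0) (j, x) (j', x')) \<le> 1"
  proof (intro ballI)
    fix j j' x x' assume "j \<in> {0..n}" "j' \<in> {0..n}" "x\<in>\<Lambda>" "x'\<in>\<Lambda>"
    then have "(j,x)\<in>I" "(j',x')\<in>I" by (simp_all add: Iin)
    from res[OF this] show "Im (C4 \<beta> n \<Lambda> E (\<lambda>_ _. 0) (j, x) (j', x')) = 0 \<and>
      cmod (C4 \<beta> n \<Lambda> E h (j, x) (j', x')) \<le> Re (C4 \<beta> n \<Lambda> E (\<lambda>_ _. 0) (j, x) (j', x')) \<and>
      Re (C4 \<beta> n \<Lambda> E (\<lambda>_ _. 0) (j, x) (j', x')) \<le> 1" by (simp add: C_def C0_def)
  qed
  ultimately show ?thesis by blast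
qed


lemma finite_torus: "finite (torus d L)"
proof -
  have "torus d L \<subseteq> (\<lambda>f i. if i < d then f i else 0) ` (PiE {..<d} (\<lambda>_. {0..<L}))"
  proof
    fix x assume x: "x \<in> torus d L"
    have "x = (\<lambda>i. if i < d then restrict x {..<d} i else 0)"
      using x by (auto simp: torus_def)
    moreover have "restrict x {..<d} \<in> PiE {..<d} (\<lambda>_. {0..<L})"
      using x by (auto simp: torus_def)
    ultimately show "x \<in> (\<lambda>f i. if i < d then f i else 0) ` (PiE {..<d} (\<lambda>_. {0..<L}))" by blast
  qed
  moreover have "finite (PiE {..<d} (\<lambda>_. {0..<L::int}))" by (intro finite_PiE) auto
  ultimately show ?thesis using finite_subset by blast
qed

theorem lemma6p6:
  fixes \<beta> :: real and d :: nat and L :: int and E :: "site \<Rightarrow> site \<Rightarrow> complex"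
  assumes "\<beta> > 0" and "L \<ge> 1"
    and "hermitian_on (torus d L) E"
    and "pos_semidef_on (torus d L) E"
    and "\<forall>x\<in>torus d L. \<forall>y\<in>torus d L. x \<noteq> y \<longrightarrow> Im (E x y) = 0 \<and> Re (E x y) \<le> 0"
  shows "(\<forall>n \<ge> 1. \<forall>h :: nat \<Rightarrow> site \<Rightarrow> real.
            is_inverse_on (idx n (torus d L)) (Q4 \<beta> n E h) (C4 \<beta> n (torus d L) E h) \<and>
            (\<forall>j\<in>{0..n}. \<forall>j'\<in>{0..n}. \<forall>x\<in>torus d L. \<forall>x'\<in>torus d L.
               Im (C4 \<beta> n (torus d L) E (\<lambda>_ _. 0) (j, x) (j', x')) = 0 \<and>
               cmod (C4 \<beta> n (torus d L) E h (j, x) (j', x'))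
                 \<le> Re (C4 \<beta> n (torus d L) E (\<lambda>_ _. 0) (j, x) (j', x'))))
       \<and> (\<exists>M. \<forall>n \<ge> 1. \<forall>j\<in>{0..n}. \<forall>j'\<in>{0..n}. \<forall>x\<in>torus d L. \<forall>x'\<in>torus d L.
               Re (C4 \<beta> n (torus d L) E (\<lambda>_ _. 0) (j, x) (j', x')) \<le> M)"
proof -
  note M = main[OF finite_torus assms(1) _ assms(3) assms(4) assms(5)]
  have A: "\<forall>n \<ge> 1. \<forall>h :: nat \<Rightarrow> site \<Rightarrow> real.
            is_inverse_on (idx n (torus d L)) (Q4 \<beta> n E h) (C4 \<beta> n (torus d L) E h) \<and>
            (\<forall>j\<in>{0..n}. \<forall>j'\<in>{0..n}. \<forall>x\<in>torus d L. \<forall>x'\<in>torus d L.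
               Im (C4 \<beta> n (torus d L) E (\<lambda>_ _. 0) (j, x) (j', x')) = 0 \<and>
               cmod (C4 \<beta> n (torus d L) E h (j, x) (j', x'))
                 \<le> Re (C4 \<beta> n (torus d L) E (\<lambda>_ _. 0) (j, x) (j', x')))"
  proof (intro allI impI)
    fix n :: nat and h :: "nat \<Rightarrow> site \<Rightarrow> real" assume n: "n \<ge> 1"
    from M[OF n, of h] show "is_inverse_on (idx n (torus d L)) (Q4 \<beta> n E h) (C4 \<beta> n (torus d L) E h) \<and>
            (\<forall>j\<in>{0..n}. \<forall>j'\<in>{0..n}. \<forall>x\<in>torus d L. \<forall>x'\<in>torus d L.
               Im (C4 \<beta> n (torus d L) E (\<lambda>_ _. 0) (j, x) (j', x')) = 0 \<and>
               cmod (C4 \<beta> n (torus d L) E h (j, x) (j', x'))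
                 \<le> Re (C4 \<beta> n (torus d L) E (\<lambda>_ _. 0) (j, x) (j', x')))" by blast
  qed
  have B: "\<forall>n \<ge> 1. \<forall>j\<in>{0..n}. \<forall>j'\<in>{0..n}. \<forall>x\<in>torus d L. \<forall>x'\<in>torus d L.
               Re (C4 \<beta> n (torus d L) E (\<lambda>_ _. 0) (j, x) (j', x')) \<le> 1"
  proof (intro allI impI)
    fix n :: nat assume n: "n \<ge> 1"
    from M[OF n, of "\<lambda>_ _. 0"] show "\<forall>j\<in>{0..n}. \<forall>j'\<in>{0..n}. \<forall>x\<in>torus d L. \<forall>x'\<in>torus d L.
               Re (C4 \<beta> n (torus d L) E (\<lambda>_ _. 0) (j, x) (j', x')) \<le> 1" by blast
  qed
  show ?thesis using A B by blast
qed

end
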